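(* Let $\lambda$ be a partition of $n$ with conjugate partition $\lambda'$, let $k\ge0$, and let $X\subseteq[n+k]$. Then $$\#\{S\in\mathrm{SYT}^{+k}(\lambda):\mathrm{Des}^{+k}(S)=X\}=\#\{S\in\mathrm{SYT}^{+k}(\lambda'):\mathrm{Des}^{+k}(S)=X\}.$$
   Context: $\mathrm{SYT}^{+k}(\lambda)$: fillings $S$ of the cells of the Ferrers diagram of $\lambda$ (rows numbered from the top) by nonempty sets of positive integers forming a set partition of $[n+k]$, with $\max S(u)<\min S(v)$ whenever $u\ne v$ and $u$ is weakly north and weakly west of $v$. For such $S$, $\mathrm{Des}^{+k}(S)$ is the set of all $x\in[n+k]$ that are not the minimum of the cell-set containing them, together with all $j$ such that $j$ is the minimum of the set in some cell $c$, $j+1$ is the minimum of the set in some cell $c'$, and $c'$ lies in a strictly higher row than $c$. *)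

theory Defs
  imports Main
begin

definition is_partition :: "nat list \<Rightarrow> nat \<Rightarrow> bool" where
  "is_partition lam n \<longleftrightarrow> sorted (rev lam) \<and> (\<forall>x\<in>set lam. 0 < x) \<and> sum_list lam = n"

text \<open>Ferrers diagram, cells (row, column), 0-indexed, rows numbered from the top.\<close>
definition ferrers :: "nat list \<Rightarrow> (nat \<times> nat) set" where
  "ferrers lam = {(i, j). i < length lam \<and> j < lam ! i}"

definition conjugate :: "nat list \<Rightarrow> nat list" where
  "conjugate lam = map (\<lambda>j. length (filter (\<lambda>r. j < r) lam))
                       [0..<(case lam of [] \<Rightarrow> 0 | r # _ \<Rightarrow> r)]"

definition SYT_plus :: "nat list \<Rightarrow> nat \<Rightarrow> ((nat \<times> nat) \<Rightarrow> nat set) set" where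
  "SYT_plus lam k = {S.
     (\<forall>u. u \<notin> ferrers lam \<longrightarrow> S u = {}) \<and>
     (\<forall>u\<in>ferrers lam. S u \<noteq> {}) \<and>
     (\<forall>u\<in>ferrers lam. \<forall>v\<in>ferrers lam. u \<noteq> v \<longrightarrow> S u \<inter> S v = {}) \<and>
     (\<Union>u\<in>ferrers lam. S u) = {1..sum_list lam + k} \<and>
     (\<forall>u\<in>ferrers lam. \<forall>v\<in>ferrers lam. u \<noteq> v \<and> fst u \<le> fst v \<and> snd u \<le> snd v
          \<longrightarrow> Max (S u) < Min (S v))}"

definition Des_plus :: "nat list \<Rightarrow> ((nat \<times> nat) \<Rightarrow> nat set) \<Rightarrow> nat set" where
  "Des_plus lam S =
     {x. \<exists>c\<in>ferrers lam. x \<in> S c \<and> x \<noteq> Min (S c)} \<union>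
     {j. \<exists>c\<in>ferrers lam. \<exists>c'\<in>ferrers lam.
           j = Min (S c) \<and> Suc j = Min (S c') \<and> fst c' < fst c}"

end

theory Submission
  imports Defs "HOL-Library.Product_Lexorder"
begin


lemma finite_ferrers: "finite (ferrers lam)"
proof -
  have "ferrers lam = (SIGMA i:{..<length lam}. {..<lam!i})" by (auto simp: ferrers_def)
  thus ?thesis by simp
qed

lemma card_ferrers: "card (ferrers lam) = sum_list lam"
proof (induction lam rule: rev_induct)
  case Nil thus ?case by (simp add: ferrers_def)
next
  case (snoc a lam)
  have "ferrers (lam @ [a]) = ferrers lam \<union> (\<lambda>j. (length lam, j)) ` {..<a}"
    by (auto simp: ferrers_def nth_append less_Suc_eq)
  moreover have "ferrers lam \<inter> (\<lambda>j. (length lam, j)) ` {..<a} = {}"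
    by (auto simp: ferrers_def)
  moreover have "finite (ferrers lam)"
    by (simp add: finite_ferrers)
  ultimately show ?case using snoc
    by (simp add: card_Un_disjoint card_image inj_on_def)
qed

lemma filter_len_iff:
  assumes "sorted (rev lam)"
  shows "i < length (filter (\<lambda>r. j < r) lam) \<longleftrightarrow> i < length lam \<and> j < lam ! i"
  using assms
proof (induction lam arbitrary: i)
  case Nil thus ?case by simp
next
  case (Cons a t)
  have st: "sorted (rev t)" and le: "\<forall>x\<in>set t. x \<le> a"
    using Cons.prems by (auto simp: sorted_append)
  show ?case
  proof (cases "j < a")
    case True
    thus ?thesis using Cons.IH[OF st] by (cases i) auto
  next
    case False
    hence "filter (\<lambda>r. j < r) t = []" using le by (auto simp: filter_empty_conv)
    moreover have "i < length (a#t) \<Longrightarrow> (a#t) ! i \<le> a" using le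
      by (cases i) (auto)
    ultimately show ?thesis using False by auto
  qed
qed

lemma nth_le_hd:
  assumes "sorted (rev (a#t))" "i < length (a#t)"
  shows "(a#t) ! i \<le> a"
  using assms by (cases i) (auto simp: sorted_append)

lemma ferrers_conjugate:
  assumes "sorted (rev lam)"
  shows "ferrers (conjugate lam) = prod.swap ` ferrers lam"
proof (cases lam)
  case Nil thus ?thesis by (simp add: ferrers_def conjugate_def)
next
  case (Cons a t)
  show ?thesis
  proof (rule set_eqI)
    fix x :: "nat \<times> nat"
    obtain j i where x: "x = (j, i)" by (cases x)
    have "x \<in> ferrers (conjugate lam) \<longleftrightarrow> j < a \<and> i < length lam \<and> j < lam ! i"
    proof -
      have "x \<in> ferrers (conjugate lam) \<longleftrightarrow> j < a \<and> i < length (filter (\<lambda>r. j < r) lam)"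
        by (simp add: x ferrers_def conjugate_def Cons)
      thus ?thesis using filter_len_iff[OF assms, of i j] by simp
    qed
    also have "\<dots> \<longleftrightarrow> i < length lam \<and> j < lam ! i"
      using nth_le_hd[of a t i] assms Cons by auto
    also have "\<dots> \<longleftrightarrow> x \<in> prod.swap ` ferrers lam"
      by (auto simp: x ferrers_def image_iff)
    finally show "x \<in> ferrers (conjugate lam) \<longleftrightarrow> x \<in> prod.swap ` ferrers lam" .
  qed
qed



definition FD :: "(nat \<times> nat) set \<Rightarrow> nat \<Rightarrow> ((nat \<times> nat) \<Rightarrow> nat set) set" where
  "FD D N = {S.
     (\<forall>u. u \<notin> D \<longrightarrow> S u = {}) \<and>
     (\<forall>u\<in>D. S u \<noteq> {}) \<and>
     (\<forall>u\<in>D. \<forall>v\<in>D. u \<noteq> v \<longrightarrow> S u \<inter> S v = {}) \<and>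
     (\<Union>u\<in>D. S u) = {1..N} \<and>
     (\<forall>u\<in>D. \<forall>v\<in>D. u \<noteq> v \<and> fst u \<le> fst v \<and> snd u \<le> snd v
          \<longrightarrow> Max (S u) < Min (S v))}"

definition DesD :: "(nat \<times> nat) set \<Rightarrow> ((nat \<times> nat) \<Rightarrow> nat set) \<Rightarrow> nat set" where
  "DesD D S =
     {x. \<exists>c\<in>D. x \<in> S c \<and> x \<noteq> Min (S c)} \<union>
     {j. \<exists>c\<in>D. \<exists>c'\<in>D. j = Min (S c) \<and> Suc j = Min (S c') \<and> fst c' < fst c}"

definition G :: "(nat \<times> nat) set \<Rightarrow> nat \<Rightarrow> nat set \<Rightarrow> nat" where
  "G D N Y = card {S \<in> FD D N. DesD D S \<subseteq> Y}"

definition maxels :: "(nat \<times> nat) set \<Rightarrow> (nat \<times> nat) set" where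
  "maxels D = {c\<in>D. \<forall>v\<in>D. fst c \<le> fst v \<and> snd c \<le> snd v \<longrightarrow> v = c}"

lemma SYT_plus_FD: "SYT_plus lam k = FD (ferrers lam) (sum_list lam + k)"
  unfolding SYT_plus_def FD_def by (rule refl)

lemma Des_plus_DesD: "Des_plus lam = DesD (ferrers lam)"
  apply (rule ext) unfolding Des_plus_def DesD_def by (rule refl)

lemma FD_out0: assumes "S \<in> FD D N" shows "\<forall>u. u \<notin> D \<longrightarrow> S u = {}"
  using assms unfolding FD_def mem_Collect_eq by (elim conjE) assumption

lemma FD_ne0: assumes "S \<in> FD D N" shows "\<forall>u\<in>D. S u \<noteq> {}"
  using assms unfolding FD_def mem_Collect_eq by (elim conjE) assumption

lemma FD_disj0: assumes "S \<in> FD D N" shows "\<forall>u\<in>D. \<forall>v\<in>D. u \<noteq> v \<longrightarrow> S u \<inter> S v = {}"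
  using assms unfolding FD_def mem_Collect_eq by (elim conjE) assumption

lemma FD_union: assumes "S \<in> FD D N" shows "(\<Union>u\<in>D. S u) = {1..N}"
  using assms unfolding FD_def mem_Collect_eq by (elim conjE) assumption

lemma FD_mono0: assumes "S \<in> FD D N" shows "\<forall>u\<in>D. \<forall>v\<in>D. u \<noteq> v \<and> fst u \<le> fst v \<and> snd u \<le> snd v \<longrightarrow> Max (S u) < Min (S v)"
  using assms unfolding FD_def mem_Collect_eq by (elim conjE) assumption

lemma FD_sub: "S \<in> FD D N \<Longrightarrow> S u \<subseteq> {1..N}"
proof (cases "u \<in> D")
  case True
  assume S: "S \<in> FD D N"
  have "S u \<subseteq> (\<Union>u\<in>D. S u)" using True by blast
  thus ?thesis using FD_union[OF S] by simp
next
  case False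
  assume S: "S \<in> FD D N"
  thus ?thesis using False FD_out0 by blast
qed

lemma FD_fin: "S \<in> FD D N \<Longrightarrow> finite (S u)"
  by (rule finite_subset[OF FD_sub]) auto

lemma FD_ne: "S \<in> FD D N \<Longrightarrow> u \<in> D \<Longrightarrow> S u \<noteq> {}"
  using FD_ne0 by metis

lemma FD_out: "S \<in> FD D N \<Longrightarrow> u \<notin> D \<Longrightarrow> S u = {}"
  using FD_out0 by metis

lemma FD_disj: assumes "S \<in> FD D N" "u \<in> D" "v \<in> D" "x \<in> S u" "x \<in> S v" shows "u = v"
proof (rule ccontr)
  assume "u \<noteq> v"
  hence "S u \<inter> S v = {}" using FD_disj0[OF assms(1)] assms(2,3) by simp
  thus False using assms(4,5) by blast
qed

lemma FD_ex: assumes "S \<in> FD D N" "1 \<le> x" "x \<le> N" shows "\<exists>c\<in>D. x \<in> S c"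
proof -
  have "x \<in> (\<Union>u\<in>D. S u)" using FD_union[OF assms(1)] assms(2,3) by simp
  thus ?thesis by (simp only: UN_iff)
qed

lemma FD_mono: assumes "S \<in> FD D N" "u \<in> D" "v \<in> D" "u \<noteq> v" "fst u \<le> fst v" "snd u \<le> snd v"
  shows "Max (S u) < Min (S v)"
  using FD_mono0[OF assms(1)] assms(2-6) by simp

lemma FD_Min_in: "S \<in> FD D N \<Longrightarrow> u \<in> D \<Longrightarrow> Min (S u) \<in> S u"
  by (rule Min_in[OF FD_fin FD_ne])

lemma FD_Max_in: "S \<in> FD D N \<Longrightarrow> u \<in> D \<Longrightarrow> Max (S u) \<in> S u"
  by (rule Max_in[OF FD_fin FD_ne])

lemma FD_Min_le: "S \<in> FD D N \<Longrightarrow> x \<in> S u \<Longrightarrow> Min (S u) \<le> x"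
  by (rule Min_le[OF FD_fin])

lemma FD_Max_ge: "S \<in> FD D N \<Longrightarrow> x \<in> S u \<Longrightarrow> x \<le> Max (S u)"
  by (rule Max_ge[OF FD_fin])

lemma finite_FD: assumes fD: "finite D" shows "finite (FD D N)"
proof -
  have "FD D N \<subseteq> {f. \<forall>x. (x \<in> D \<longrightarrow> f x \<in> Pow {1..N}) \<and> (x \<notin> D \<longrightarrow> f x = {})}"
  proof (rule subsetI, rule CollectI, intro allI conjI impI)
    fix S x assume S: "S \<in> FD D N"
    show "S x \<in> Pow {1..N}" using FD_sub[OF S] by simp
    assume "x \<notin> D" thus "S x = {}" using FD_out[OF S] by simp
  qed
  moreover have "finite {f. \<forall>x. (x \<in> D \<longrightarrow> f x \<in> Pow {1..N}) \<and> (x \<notin> D \<longrightarrow> f x = ({}::nat set))}"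
    by (rule finite_set_of_finite_funs) (use fD in auto)
  ultimately show ?thesis using finite_subset by blast
qed

lemma DesD_sub: "S \<in> FD D N \<Longrightarrow> DesD D S \<subseteq> {1..N}"
proof
  fix x assume S: "S \<in> FD D N" and "x \<in> DesD D S"
  then consider (a) c where "c \<in> D" "x \<in> S c" | (b) c c' where "c\<in>D" "c'\<in>D" "x = Min (S c)" "Suc x = Min (S c')"
    unfolding DesD_def by blast
  thus "x \<in> {1..N}"
  proof cases
    case a thus ?thesis using FD_sub[OF S] by blast
  next
    case b
    have "x \<in> S c" "Suc x \<in> S c'" using b FD_Min_in[OF S] by auto
    thus ?thesis using FD_sub[OF S, of c] FD_sub[OF S, of c'] by auto
  qed
qed

lemma G_zero: "G D 0 Y = (if D = {} then 1 else 0)"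
proof (cases "D = {}")
  case True
  have e: "(\<lambda>_. {}) \<in> FD D 0" using True unfolding FD_def by simp
  have "{S \<in> FD D 0. DesD D S \<subseteq> Y} = {\<lambda>_. {}}"
  proof (rule set_eqI, rule iffI)
    fix S assume "S \<in> {S \<in> FD D 0. DesD D S \<subseteq> Y}"
    hence "S \<in> FD D 0" by simp
    hence "S = (\<lambda>_. {})" using FD_out True by fastforce
    thus "S \<in> {\<lambda>_. {}}" by simp
  next
    fix S :: "nat \<times> nat \<Rightarrow> nat set" assume "S \<in> {\<lambda>_. {}}"
    hence "S = (\<lambda>_. {})" by simp
    moreover have "DesD D (\<lambda>_. {}) = {}" using True by (simp add: DesD_def)
    ultimately show "S \<in> {S \<in> FD D 0. DesD D S \<subseteq> Y}" using e by simp
  qed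
  thus ?thesis using True by (simp add: G_def)
next
  case False
  then obtain u where u: "u \<in> D" by blast
  have "FD D 0 = {}"
  proof (rule ccontr)
    assume "FD D 0 \<noteq> {}"
    then obtain S where S: "S \<in> FD D 0" by blast
    show False using FD_sub[OF S, of u] FD_ne[OF S u] by auto
  qed
  thus ?thesis using False by (simp add: G_def)
qed



definition newp :: "(nat \<times> nat) set \<Rightarrow> nat \<Rightarrow> ((nat \<times> nat) \<Rightarrow> nat set) \<Rightarrow> bool" where
  "newp D N S \<longleftrightarrow> (\<forall>c\<in>D. N \<in> S c \<longrightarrow> Min (S c) = N)"

lemma ext_rep:
  assumes S': "S' \<in> FD D M" and c: "c \<in> maxels D"
  defines "S \<equiv> S'(c := insert (Suc M) (S' c))"
  shows "S \<in> FD D (Suc M)" and "DesD D S = insert (Suc M) (DesD D S')"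
    and "Suc M \<in> S c" and "Min (S c) \<noteq> Suc M"
proof -
  have cD: "c \<in> D" and cmax: "\<And>v. v \<in> D \<Longrightarrow> fst c \<le> fst v \<Longrightarrow> snd c \<le> snd v \<Longrightarrow> v = c"
    using c by (auto simp: maxels_def)
  have fc: "finite (S' c)" and nec: "S' c \<noteq> {}" and subc: "S' c \<subseteq> {1..M}"
    using FD_fin[OF S'] FD_ne[OF S' cD] FD_sub[OF S'] by auto
  have Mc: "Min (S' c) \<le> M" using Min_in[OF fc nec] subc by auto
  have Sc: "S c = insert (Suc M) (S' c)" by (simp add: S_def)
  have Su: "\<And>u. u \<noteq> c \<Longrightarrow> S u = S' u" by (simp add: S_def)
  have MinS: "Min (S u) = Min (S' u)" for u
  proof (cases "u = c")
    case True
    have "Min (S c) = min (Suc M) (Min (S' c))" using Sc fc nec by (simp add: Min_insert)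
    thus ?thesis using Mc True by simp
  qed (simp add: Su)
  show "Suc M \<in> S c" using Sc by simp
  show "Min (S c) \<noteq> Suc M" using MinS[of c] Mc by simp
  have nM: "Suc M \<notin> S' u" for u using FD_sub[OF S', of u] by auto
  show "S \<in> FD D (Suc M)"
    unfolding FD_def mem_Collect_eq
  proof (intro conjI ballI allI impI)
    fix u assume "u \<notin> D" thus "S u = {}" using cD Su FD_out[OF S'] by (metis)
  next
    fix u assume "u \<in> D" thus "S u \<noteq> {}" using Sc Su FD_ne[OF S'] by (metis insert_not_empty)
  next
    fix u v assume u: "u \<in> D" and v: "v \<in> D" and uv: "u \<noteq> v"
    have "S' u \<inter> S' v = {}" using FD_disj[OF S' u v] uv by blast
    thus "S u \<inter> S v = {}" using Sc Su nM uv by (cases "u = c"; cases "v = c") auto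
  next
    have "(\<Union>u\<in>D. S u) = insert (Suc M) (\<Union>u\<in>D. S' u)"
    proof
      show "(\<Union>u\<in>D. S u) \<subseteq> insert (Suc M) (\<Union>u\<in>D. S' u)"
        using Sc Su by (smt (verit, ccfv_threshold) UN_iff insert_iff subsetI)
      show "insert (Suc M) (\<Union>u\<in>D. S' u) \<subseteq> (\<Union>u\<in>D. S u)"
        using Sc Su cD by (smt (verit, ccfv_threshold) UN_iff insert_iff subsetI)
    qed
    also have "\<dots> = {1..Suc M}" using FD_union[OF S'] by auto
    finally show "(\<Union>u\<in>D. S u) = {1..Suc M}" .
  next
    fix u v assume u: "u \<in> D" and v: "v \<in> D" and h: "u \<noteq> v \<and> fst u \<le> fst v \<and> snd u \<le> snd v"
    have uc: "u \<noteq> c" using cmax[OF v] h by auto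
    show "Max (S u) < Min (S v)"
      using FD_mono[OF S' u v] h MinS[of v] Su[OF uc] by simp
  qed
  show "DesD D S = insert (Suc M) (DesD D S')"
  proof -
    have A: "{x. \<exists>c'\<in>D. x \<in> S c' \<and> x \<noteq> Min (S c')} = insert (Suc M) {x. \<exists>c'\<in>D. x \<in> S' c' \<and> x \<noteq> Min (S' c')}"
    proof (rule set_eqI)
      fix x
      show "x \<in> {x. \<exists>c'\<in>D. x \<in> S c' \<and> x \<noteq> Min (S c')} \<longleftrightarrow>
            x \<in> insert (Suc M) {x. \<exists>c'\<in>D. x \<in> S' c' \<and> x \<noteq> Min (S' c')}"
      proof
        assume "x \<in> {x. \<exists>c'\<in>D. x \<in> S c' \<and> x \<noteq> Min (S c')}"
        then obtain c' where c': "c' \<in> D" "x \<in> S c'" "x \<noteq> Min (S c')" by blast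
        have m: "x \<noteq> Min (S' c')" using c'(3) MinS[of c'] by simp
        show "x \<in> insert (Suc M) {x. \<exists>c'\<in>D. x \<in> S' c' \<and> x \<noteq> Min (S' c')}"
        proof (cases "c' = c")
          case True
          hence "x = Suc M \<or> x \<in> S' c'" using c'(2) Sc by simp
          thus ?thesis using m c'(1) by blast
        next
          case False
          thus ?thesis using m c' Su[OF False] by blast
        qed
      next
        assume "x \<in> insert (Suc M) {x. \<exists>c'\<in>D. x \<in> S' c' \<and> x \<noteq> Min (S' c')}"
        then consider "x = Suc M" | c' where "c' \<in> D" "x \<in> S' c'" "x \<noteq> Min (S' c')" by blast
        thus "x \<in> {x. \<exists>c'\<in>D. x \<in> S c' \<and> x \<noteq> Min (S c')}"
        proof cases
          case 1
          have "Suc M \<in> S c" using Sc by simp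
          moreover have "Suc M \<noteq> Min (S c)" using MinS[of c] Mc by simp
          ultimately show ?thesis using 1 cD by blast
        next
          case 2
          have "x \<in> S c'" using 2 Sc Su by (cases "c' = c") auto
          moreover have "x \<noteq> Min (S c')" using 2 MinS[of c'] by simp
          ultimately show ?thesis using 2(1) by blast
        qed
      qed
    qed
    have B: "{j. \<exists>c\<in>D. \<exists>c'\<in>D. j = Min (S c) \<and> Suc j = Min (S c') \<and> fst c' < fst c}
           = {j. \<exists>c\<in>D. \<exists>c'\<in>D. j = Min (S' c) \<and> Suc j = Min (S' c') \<and> fst c' < fst c}"
      by (simp only: MinS)
    show ?thesis unfolding DesD_def A B by blast
  qed
qed

lemma rem_rep:
  assumes S: "S \<in> FD D (Suc M)" and cD: "c \<in> D" and N: "Suc M \<in> S c" and mn: "Min (S c) \<noteq> Suc M"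
  shows "c \<in> maxels D" and "S(c := S c - {Suc M}) \<in> FD D M"
proof -
  have fc: "finite (S c)" using FD_fin[OF S] .
  have Mx: "Max (S c) = Suc M" using FD_Max_ge[OF S N] FD_Max_in[OF S cD] FD_sub[OF S, of c] by force
  show "c \<in> maxels D"
    unfolding maxels_def
  proof (intro CollectI conjI ballI impI cD)
    fix v assume v: "v \<in> D" and le: "fst c \<le> fst v \<and> snd c \<le> snd v"
    show "v = c"
    proof (rule ccontr)
      assume "v \<noteq> c"
      hence "Max (S c) < Min (S v)" using FD_mono[OF S cD v] le by simp
      moreover have "Min (S v) \<le> Suc M" using FD_Min_in[OF S v] FD_sub[OF S, of v] by auto
      ultimately show False using Mx by simp
    qed
  qed
  define S' where "S' = S(c := S c - {Suc M})"
  have mc: "Min (S c) \<in> S c - {Suc M}" using FD_Min_in[OF S cD] mn by simp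
  have S'c: "S' c = S c - {Suc M}" and S'u: "\<And>u. u \<noteq> c \<Longrightarrow> S' u = S u" by (simp_all add: S'_def)
  have nN: "\<And>u. u \<in> D \<Longrightarrow> u \<noteq> c \<Longrightarrow> Suc M \<notin> S u" using FD_disj[OF S _ cD _ N] by metis
  have sub: "S' u \<subseteq> S u" for u using S'c S'u by (cases "u = c") auto
  have ne': "u \<in> D \<Longrightarrow> S' u \<noteq> {}" for u using mc S'c S'u FD_ne[OF S] by (cases "u = c") auto
  show "S(c := S c - {Suc M}) \<in> FD D M"
    unfolding S'_def[symmetric] FD_def mem_Collect_eq
  proof (intro conjI ballI allI impI)
    fix u assume "u \<notin> D" thus "S' u = {}" using cD S'u FD_out[OF S] by metis
  next
    fix u assume "u \<in> D" thus "S' u \<noteq> {}" by (rule ne')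
  next
    fix u v assume u: "u \<in> D" and v: "v \<in> D" and uv: "u \<noteq> v"
    show "S' u \<inter> S' v = {}" using FD_disj[OF S u v] uv sub[of u] sub[of v] by blast
  next
    show "(\<Union>u\<in>D. S' u) = {1..M}"
    proof
      show "(\<Union>u\<in>D. S' u) \<subseteq> {1..M}"
      proof
        fix x assume "x \<in> (\<Union>u\<in>D. S' u)"
        then obtain u where u: "u \<in> D" "x \<in> S' u" by blast
        have "x \<in> {1..Suc M}" using sub[of u] u FD_sub[OF S, of u] by auto
        moreover have "x \<noteq> Suc M"
        proof (cases "u = c")
          case True thus ?thesis using u S'c by auto
        next
          case False thus ?thesis using u S'u[OF False] nN[OF u(1) False] by auto
        qed
        ultimately show "x \<in> {1..M}" by auto
      qed
      show "{1..M} \<subseteq> (\<Union>u\<in>D. S' u)"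
      proof
        fix x assume x: "x \<in> {1..M}"
        then obtain u where u: "u \<in> D" "x \<in> S u" using FD_ex[OF S, of x] by auto
        hence "x \<in> S' u" using x S'c S'u by (cases "u = c") auto
        thus "x \<in> (\<Union>u\<in>D. S' u)" using u by blast
      qed
    qed
  next
    fix u v assume u: "u \<in> D" and v: "v \<in> D" and h: "u \<noteq> v \<and> fst u \<le> fst v \<and> snd u \<le> snd v"
    have "Max (S' u) \<le> Max (S u)" using Max_mono[OF sub ne'[OF u] FD_fin[OF S]] .
    moreover have "Min (S v) \<le> Min (S' v)" using Min_antimono[OF sub ne'[OF v] FD_fin[OF S]] .
    moreover have "Max (S u) < Min (S v)" using FD_mono[OF S u v] h by simp
    ultimately show "Max (S' u) < Min (S' v)" by linarith
  qed
qed

lemma FD_the_cell: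
  assumes S: "S \<in> FD D N" and cD: "c \<in> D" and x: "x \<in> S c"
  shows "(THE c. c \<in> D \<and> x \<in> S c) = c"
proof (rule the_equality)
  show "c \<in> D \<and> x \<in> S c" using cD x by simp
  fix c' assume "c' \<in> D \<and> x \<in> S c'"
  hence "c' \<in> D" "x \<in> S c'" by auto
  thus "c' = c" by (rule FD_disj[OF S _ cD _ x])
qed

lemma card_rep:
  assumes fD: "finite D"
  shows "card {S \<in> FD D (Suc M). DesD D S \<subseteq> Y \<and> \<not> newp D (Suc M) S}
         = (if Suc M \<in> Y then card (maxels D) * G D M Y else 0)"
proof (cases "Suc M \<in> Y")
  case False
  have E: "{S \<in> FD D (Suc M). DesD D S \<subseteq> Y \<and> \<not> newp D (Suc M) S} = {}"
  proof (rule ccontr)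
    assume "{S \<in> FD D (Suc M). DesD D S \<subseteq> Y \<and> \<not> newp D (Suc M) S} \<noteq> {}"
    then obtain S where S: "S \<in> FD D (Suc M)" "DesD D S \<subseteq> Y" "\<not> newp D (Suc M) S" by blast
    then obtain c where "c \<in> D" "Suc M \<in> S c" "Min (S c) \<noteq> Suc M" unfolding newp_def by blast
    hence "Suc M \<in> {x. \<exists>c\<in>D. x \<in> S c \<and> x \<noteq> Min (S c)}" by (metis (mono_tags, lifting) mem_Collect_eq)
    hence "Suc M \<in> DesD D S" unfolding DesD_def by (rule UnI1)
    thus False using S(2) False by blast
  qed
  show ?thesis unfolding E using False by simp
next
  case True
  let ?A = "maxels D \<times> {S' \<in> FD D M. DesD D S' \<subseteq> Y}"
  let ?B = "{S \<in> FD D (Suc M). DesD D S \<subseteq> Y \<and> \<not> newp D (Suc M) S}"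
  define f where "f = (\<lambda>(c::nat\<times>nat, S'::nat\<times>nat \<Rightarrow> nat set). S'(c := insert (Suc M) (S' c)))"
  define cN where "cN = (\<lambda>S::nat\<times>nat \<Rightarrow> nat set. THE c. c \<in> D \<and> Suc M \<in> S c)"
  define g where "g = (\<lambda>S. (cN S, S(cN S := S (cN S) - {Suc M})))"
  have "bij_betw f ?A ?B"
  proof (rule bij_betw_byWitness[where f'=g])
    show "\<forall>a\<in>?A. g (f a) = a"
    proof
      fix a assume "a \<in> ?A"
      then obtain c S' where a: "a = (c, S')" and c: "c \<in> maxels D" and S': "S' \<in> FD D M" by blast
      have cD: "c \<in> D" using c by (simp add: maxels_def)
      note e = ext_rep[OF S' c]
      have fa: "f a = S'(c := insert (Suc M) (S' c))" by (simp add: f_def a)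
      have cn: "cN (f a) = c" unfolding cN_def fa by (rule FD_the_cell[OF e(1) cD e(3)])
      have ins: "insert (Suc M) (S' c) - {Suc M} = S' c" using FD_sub[OF S', of c] by auto
      have "g (f a) = (c, (f a)(c := f a c - {Suc M}))" using cn by (simp add: g_def)
      also have "(f a)(c := f a c - {Suc M}) = S'" unfolding fa using ins by simp
      finally show "g (f a) = a" using a by simp
    qed
  next
    show "\<forall>a'\<in>?B. f (g a') = a'"
    proof
      fix S assume "S \<in> ?B"
      hence S: "S \<in> FD D (Suc M)" and nn: "\<not> newp D (Suc M) S" by auto
      then obtain c where c: "c \<in> D" "Suc M \<in> S c" "Min (S c) \<noteq> Suc M" unfolding newp_def by blast
      have "cN S = c" unfolding cN_def by (rule FD_the_cell[OF S c(1,2)])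
      hence "g S = (c, S(c := S c - {Suc M}))" by (simp add: g_def)
      hence "f (g S) = S(c := insert (Suc M) (S c - {Suc M}))" by (simp add: f_def)
      also have "insert (Suc M) (S c - {Suc M}) = S c" using c(2) by blast
      finally show "f (g S) = S" by simp
    qed
  next
    show "f ` ?A \<subseteq> ?B"
    proof
      fix S assume "S \<in> f ` ?A"
      then obtain a where a: "a \<in> ?A" "S = f a" by blast
      obtain c S' where ac: "a = (c, S')" by (cases a)
      have c: "c \<in> maxels D" and S': "S' \<in> FD D M" "DesD D S' \<subseteq> Y" using a(1) ac by auto
      have Sd: "S = S'(c := insert (Suc M) (S' c))" using a(2) ac by (simp add: f_def)
      note e = ext_rep[OF S'(1) c]
      have cD: "c \<in> D" using c by (simp add: maxels_def)
      have "\<not> newp D (Suc M) S" unfolding newp_def Sd using e(3,4) cD by blast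
      moreover have "DesD D S \<subseteq> Y" using e(2) S'(2) True Sd by simp
      ultimately show "S \<in> ?B" using e(1) Sd by simp
    qed
  next
    show "g ` ?B \<subseteq> ?A"
    proof
      fix a assume "a \<in> g ` ?B"
      then obtain S where "S \<in> ?B" and a: "a = g S" by blast
      hence S: "S \<in> FD D (Suc M)" and Y: "DesD D S \<subseteq> Y" and nn: "\<not> newp D (Suc M) S" by auto
      then obtain c where c: "c \<in> D" "Suc M \<in> S c" "Min (S c) \<noteq> Suc M" unfolding newp_def by blast
      have cN: "cN S = c" unfolding cN_def by (rule FD_the_cell[OF S c(1,2)])
      note r = rem_rep[OF S c]
      define S' where "S' = S(c := S c - {Suc M})"
      have S'F: "S' \<in> FD D M" using r(2) by (simp add: S'_def)
      have eq: "insert (Suc M) (S c - {Suc M}) = S c" using c(2) by blast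
      have "S'(c := insert (Suc M) (S' c)) = S" using c(2) by (simp add: S'_def eq insert_absorb)
      hence "DesD D S = insert (Suc M) (DesD D S')" using ext_rep(2)[OF S'F r(1)] by simp
      hence "DesD D S' \<subseteq> Y" using Y by blast
      thus "a \<in> ?A" using a cN r(1) S'F by (simp add: g_def S'_def)
    qed
  qed
  hence "card ?B = card ?A" by (simp add: bij_betw_same_card)
  also have "\<dots> = card (maxels D) * G D M Y" by (simp add: card_cartesian_product G_def)
  finally show ?thesis using True by simp
qed



definition R :: "(nat \<times> nat) set \<Rightarrow> nat \<Rightarrow> (nat \<times> nat) set set" where
  "R D j = {B. B \<subseteq> D \<and> card B = j \<and> (\<forall>u\<in>D-B. \<forall>v\<in>B. \<not> (fst v \<le> fst u \<and> snd v \<le> snd u))}"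

definition blk :: "(nat \<times> nat) set \<Rightarrow> nat \<Rightarrow> ((nat \<times> nat) \<Rightarrow> nat set) \<Rightarrow> (nat \<times> nat) set" where
  "blk D m S = {c\<in>D. m < Min (S c)}"

definition rst :: "(nat \<times> nat) set \<Rightarrow> ((nat \<times> nat) \<Rightarrow> nat set) \<Rightarrow> ((nat \<times> nat) \<Rightarrow> nat set)" where
  "rst B S = (\<lambda>u. if u \<in> B then {} else S u)"

definition extB :: "nat \<Rightarrow> nat \<Rightarrow> (nat \<times> nat) set \<Rightarrow> ((nat \<times> nat) \<Rightarrow> nat set) \<Rightarrow> ((nat \<times> nat) \<Rightarrow> nat set)" where
  "extB m N B S' = (\<lambda>u. if u \<in> B then {x. m < x \<and> x \<le> N \<and> sorted_list_of_set B ! (x - Suc m) = u} else S' u)"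

lemma extB_sing:
  assumes fB: "finite B" and cB: "card B = N - m" and i: "i < N - m"
  shows "extB m N B S' (sorted_list_of_set B ! i) = {Suc m + i}"
proof -
  let ?L = "sorted_list_of_set B"
  have len: "length ?L = N - m" using cB by simp
  have dist: "distinct ?L" by simp
  have inB: "?L ! i \<in> B" using i len fB by (metis nth_mem set_sorted_list_of_set)
  have "{x. m < x \<and> x \<le> N \<and> ?L ! (x - Suc m) = ?L ! i} = {Suc m + i}"
  proof (rule set_eqI, rule iffI)
    fix x assume "x \<in> {x. m < x \<and> x \<le> N \<and> ?L ! (x - Suc m) = ?L ! i}"
    hence x: "m < x" "x \<le> N" "?L ! (x - Suc m) = ?L ! i" by auto
    have "x - Suc m < length ?L" using x len by linarith
    hence "x - Suc m = i" using nth_eq_iff_index_eq[OF dist] x(3) i len by metis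
    thus "x \<in> {Suc m + i}" using x by simp
  next
    fix x assume "x \<in> {Suc m + i}"
    thus "x \<in> {x. m < x \<and> x \<le> N \<and> ?L ! (x - Suc m) = ?L ! i}" using i by auto
  qed
  thus ?thesis using inB by (simp add: extB_def)
qed

lemma in_sorted_B:
  assumes fB: "finite B" and cB: "card B = N - m" and u: "u \<in> B"
  obtains i where "i < N - m" "u = sorted_list_of_set B ! i"
proof -
  have "u \<in> set (sorted_list_of_set B)" using u fB by simp
  then obtain i where "i < length (sorted_list_of_set B)" "sorted_list_of_set B ! i = u"
    by (metis in_set_conv_nth)
  thus ?thesis using that cB by simp
qed

lemma sorted_B_lt:
  assumes fB: "finite B" and ij: "i < j" and j: "j < card B"
  shows "sorted_list_of_set B ! i < sorted_list_of_set B ! j"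
proof -
  have "sorted_wrt (<) (sorted_list_of_set B)"
    using sorted_list_of_set.strict_sorted_key_list_of_set[of B] by simp
  moreover have "j < length (sorted_list_of_set B)" using j by simp
  ultimately show ?thesis by (rule sorted_wrt_nth_less[OF _ ij])
qed

lemma construct:
  assumes fD: "finite D" and B: "B \<in> R D (N - m)" and S': "S' \<in> FD (D - B) m"
    and Y': "DesD (D - B) S' \<subseteq> Y" and hm: "m < N" and hm0: "m = 0 \<or> m \<in> Y"
  defines "S \<equiv> extB m N B S'"
  shows "S \<in> FD D N" "DesD D S \<subseteq> Y" "newp D N S" "blk D m S = B" "rst B S = S'"
proof -
  have BD: "B \<subseteq> D" and cB: "card B = N - m"
    and rem: "\<And>u v. u \<in> D - B \<Longrightarrow> v \<in> B \<Longrightarrow> \<not> (fst v \<le> fst u \<and> snd v \<le> snd u)"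
    using B by (auto simp: R_def)
  have fB: "finite B" using BD fD finite_subset by blast
  let ?L = "sorted_list_of_set B"
  have SB: "\<And>i. i < N - m \<Longrightarrow> S (?L ! i) = {Suc m + i}"
    unfolding S_def by (rule extB_sing[OF fB cB])
  have SnB: "\<And>u. u \<notin> B \<Longrightarrow> S u = S' u" by (simp add: S_def extB_def)
  have inB: "\<exists>i. i < N - m \<and> u = ?L ! i \<and> S u = {Suc m + i}" if uB: "u \<in> B" for u
  proof -
    obtain i where "i < N - m" "u = ?L ! i" using in_sorted_B[OF fB cB uB] by blast
    thus ?thesis using SB by blast
  qed
  have Lin: "\<And>i. i < N - m \<Longrightarrow> ?L ! i \<in> B"
    using fB cB by (metis length_sorted_list_of_set nth_mem set_sorted_list_of_set)
  have S'sub: "\<And>u. S' u \<subseteq> {1..m}" using FD_sub[OF S'] by blast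
  have S'ne: "\<And>u. u \<in> D - B \<Longrightarrow> S' u \<noteq> {}" using FD_ne[OF S'] by blast
  have MinS': "\<And>u. u \<in> D - B \<Longrightarrow> Min (S' u) \<in> S' u" using FD_Min_in[OF S'] by blast
  have MaxS': "\<And>u. u \<in> D - B \<Longrightarrow> Max (S' u) \<in> S' u" using FD_Max_in[OF S'] by blast
  show SF: "S \<in> FD D N"
    unfolding FD_def mem_Collect_eq
  proof (intro conjI ballI allI impI)
    fix u assume "u \<notin> D"
    hence "u \<notin> B" "u \<notin> D - B" using BD by auto
    thus "S u = {}" using SnB FD_out[OF S'] by simp
  next
    fix u assume u: "u \<in> D"
    show "S u \<noteq> {}"
    proof (cases "u \<in> B")
      case True thus ?thesis using inB by blast
    next
      case False thus ?thesis using u SnB S'ne by simp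
    qed
  next
    fix u v assume u: "u \<in> D" and v: "v \<in> D" and uv: "u \<noteq> v"
    show "S u \<inter> S v = {}"
    proof (cases "u \<in> B"; cases "v \<in> B")
      assume "u \<in> B" "v \<in> B"
      then obtain i j where "u = ?L ! i" "S u = {Suc m + i}" "v = ?L ! j" "S v = {Suc m + j}"
        using inB by meson
      thus ?thesis using uv by auto
    next
      assume "u \<in> B" "v \<notin> B"
      then obtain i where "S u = {Suc m + i}" using inB by blast
      moreover have "S v \<subseteq> {1..m}" using SnB[OF \<open>v \<notin> B\<close>] S'sub by simp
      ultimately show ?thesis by auto
    next
      assume "u \<notin> B" "v \<in> B"
      then obtain i where "S v = {Suc m + i}" using inB by blast
      moreover have "S u \<subseteq> {1..m}" using SnB[OF \<open>u \<notin> B\<close>] S'sub by simp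
      ultimately show ?thesis by auto
    next
      assume nu: "u \<notin> B" and nv: "v \<notin> B"
      have "S' u \<inter> S' v = {}"
      proof (rule ccontr)
        assume "S' u \<inter> S' v \<noteq> {}"
        then obtain x where "x \<in> S' u" "x \<in> S' v" by blast
        hence "u = v" using FD_disj[OF S'] u v nu nv by simp
        thus False using uv by simp
      qed
      thus ?thesis using SnB nu nv by simp
    qed
  next
    show "(\<Union>u\<in>D. S u) = {1..N}"
    proof
      show "(\<Union>u\<in>D. S u) \<subseteq> {1..N}"
      proof
        fix x assume "x \<in> (\<Union>u\<in>D. S u)"
        then obtain u where u: "u \<in> D" "x \<in> S u" by blast
        show "x \<in> {1..N}"
        proof (cases "u \<in> B")
          case True
          then obtain i where "i < N - m" "S u = {Suc m + i}" using inB by blast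
          thus ?thesis using u(2) by auto
        next
          case False
          thus ?thesis using u(2) SnB S'sub hm by fastforce
        qed
      qed
      show "{1..N} \<subseteq> (\<Union>u\<in>D. S u)"
      proof
        fix x assume x: "x \<in> {1..N}"
        show "x \<in> (\<Union>u\<in>D. S u)"
        proof (cases "x \<le> m")
          case True
          then obtain u where u: "u \<in> D - B" "x \<in> S' u" using FD_ex[OF S', of x] x by auto
          hence "x \<in> S u" using SnB[of u] by simp
          thus ?thesis using u(1) by blast
        next
          case False
          define i where "i = x - Suc m"
          have i: "i < N - m" using False x by (auto simp: i_def)
          have "x \<in> S (?L ! i)" using SB[OF i] False by (simp add: i_def)
          moreover have "?L ! i \<in> D" using Lin[OF i] BD by blast
          ultimately show ?thesis by blast
        qed
      qed
    qed
  next
    fix u v assume u: "u \<in> D" and v: "v \<in> D" and h: "u \<noteq> v \<and> fst u \<le> fst v \<and> snd u \<le> snd v"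
    show "Max (S u) < Min (S v)"
    proof (cases "u \<in> B"; cases "v \<in> B")
      assume "u \<in> B" "v \<in> B"
      then obtain i j where ij: "i < N - m" "u = ?L ! i" "S u = {Suc m + i}" "j < N - m" "v = ?L ! j" "S v = {Suc m + j}"
        using inB by meson
      have "\<not> j < i"
      proof
        assume "j < i"
        hence "v < u" using sorted_B_lt[OF fB, of j i] ij cB by simp
        thus False using h by (simp add: less_prod_def)
      qed
      moreover have "i \<noteq> j" using ij h by auto
      ultimately show ?thesis using ij by simp
    next
      assume "u \<in> B" "v \<notin> B"
      thus ?thesis using rem[of v u] v h by simp
    next
      assume nu: "u \<notin> B" and vB: "v \<in> B"
      then obtain j where "S v = {Suc m + j}" using inB by blast
      moreover have "Max (S u) \<le> m" using MaxS'[of u] u nu SnB[OF nu] S'sub[of u] by auto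
      ultimately show ?thesis by simp
    next
      assume nu: "u \<notin> B" and nv: "v \<notin> B"
      have "Max (S' u) < Min (S' v)" using FD_mono[OF S', of u v] u v nu nv h by simp
      thus ?thesis using SnB nu nv by simp
    qed
  qed
  show "DesD D S \<subseteq> Y"
  proof
    fix x assume "x \<in> DesD D S"
    then consider (a) c where "c \<in> D" "x \<in> S c" "x \<noteq> Min (S c)"
      | (b) c c' where "c \<in> D" "c' \<in> D" "x = Min (S c)" "Suc x = Min (S c')" "fst c' < fst c"
      unfolding DesD_def by blast
    thus "x \<in> Y"
    proof cases
      case a
      show ?thesis
      proof (cases "c \<in> B")
        case True
        then obtain i where "S c = {Suc m + i}" using inB by blast
        thus ?thesis using a by simp
      next
        case False
        hence "x \<in> DesD (D - B) S'" using a SnB[OF False] unfolding DesD_def by auto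
        thus ?thesis using Y' by blast
      qed
    next
      case b
      show ?thesis
      proof (cases "c \<in> B"; cases "c' \<in> B")
        assume "c \<in> B" "c' \<in> B"
        then obtain i j where ij: "i < N - m" "c = ?L ! i" "S c = {Suc m + i}" "j < N - m" "c' = ?L ! j" "S c' = {Suc m + j}"
          using inB by meson
        have "j = Suc i" using b ij by simp
        hence "c < c'" using sorted_B_lt[OF fB, of i j] ij cB by simp
        thus ?thesis using b(5) by (simp add: less_prod_def)
      next
        assume "c \<in> B" "c' \<notin> B"
        then obtain i where "S c = {Suc m + i}" using inB by blast
        moreover have "Min (S c') \<le> m" using MinS'[of c'] b(2) \<open>c' \<notin> B\<close> SnB S'sub[of c'] by fastforce
        ultimately show ?thesis using b by simp
      next
        assume nc: "c \<notin> B" and "c' \<in> B"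
        then obtain j where "S c' = {Suc m + j}" using inB by blast
        moreover have "Min (S c) \<in> {1..m}" using MinS'[of c] b(1) nc SnB S'sub[of c] by fastforce
        ultimately have "x = m" "m \<noteq> 0" using b by auto
        thus ?thesis using hm0 by simp
      next
        assume nc: "c \<notin> B" and nc': "c' \<notin> B"
        hence "x \<in> DesD (D - B) S'" using b SnB[OF nc] SnB[OF nc'] unfolding DesD_def by auto
        thus ?thesis using Y' by blast
      qed
    qed
  qed
  show "newp D N S"
    unfolding newp_def
  proof (intro ballI impI)
    fix c assume c: "c \<in> D" and N: "N \<in> S c"
    show "Min (S c) = N"
    proof (cases "c \<in> B")
      case True
      then obtain i where "S c = {Suc m + i}" using inB by blast
      thus ?thesis using N by simp
    next
      case False
      hence "N \<in> {1..m}" using N SnB S'sub by blast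
      thus ?thesis using hm by simp
    qed
  qed
  show "blk D m S = B"
  proof (rule set_eqI)
    fix c
    show "c \<in> blk D m S \<longleftrightarrow> c \<in> B"
    proof (cases "c \<in> B")
      case True
      then obtain i where "S c = {Suc m + i}" using inB by blast
      thus ?thesis using True BD by (auto simp: blk_def)
    next
      case False
      have "c \<in> D \<Longrightarrow> Min (S c) \<le> m" using MinS'[of c] False SnB S'sub[of c] by fastforce
      thus ?thesis using False by (auto simp: blk_def)
    qed
  qed
  show "rst B S = S'"
  proof
    fix u show "rst B S u = S' u"
    proof (cases "u \<in> B")
      case True
      hence "u \<notin> D - B" by simp
      thus ?thesis using True FD_out[OF S'] by (simp add: rst_def)
    next
      case False thus ?thesis using SnB by (simp add: rst_def)
    qed
  qed
qed

lemma decompose: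
  assumes fD: "finite D" and S: "S \<in> FD D N" and Y: "DesD D S \<subseteq> Y" and nw: "newp D N S"
    and hm: "m < N" and hY: "\<And>x. m < x \<Longrightarrow> x < N \<Longrightarrow> x \<notin> Y"
  defines "B \<equiv> blk D m S"
  shows "B \<in> R D (N - m)" "rst B S \<in> FD (D - B) m" "DesD (D - B) (rst B S) \<subseteq> Y"
    "extB m N B (rst B S) = S"
proof -
  have minimal: "x = Min (S c)" if c: "c \<in> D" and x: "x \<in> S c" and mx: "m < x" for c x
  proof -
    have xN: "x \<le> N" using FD_sub[OF S, of c] x by auto
    show ?thesis
    proof (cases "x = N")
      case True thus ?thesis using nw c x unfolding newp_def by simp
    next
      case False
      hence nY: "x \<notin> Y" using hY mx xN by simp
      show ?thesis
      proof (rule ccontr)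
        assume "x \<noteq> Min (S c)"
        hence "x \<in> {x. \<exists>c\<in>D. x \<in> S c \<and> x \<noteq> Min (S c)}" using c x by blast
        hence "x \<in> DesD D S" unfolding DesD_def by (rule UnI1)
        thus False using Y nY by blast
      qed
    qed
  qed
  define cf where "cf = (\<lambda>x. THE c. c \<in> D \<and> x \<in> S c)"
  have cfp: "cf x \<in> D \<and> x \<in> S (cf x)" if x12: "1 \<le> x" "x \<le> N" for x
  proof -
    obtain c where c: "c \<in> D" "x \<in> S c" using FD_ex[OF S x12] by blast
    have "cf x = c" unfolding cf_def by (rule FD_the_cell[OF S c])
    thus ?thesis using c by simp
  qed
  have cfc: "cf x = c" if "c \<in> D" "x \<in> S c" for c x
    unfolding cf_def by (rule FD_the_cell[OF S that])
  have Bdef: "c \<in> B \<longleftrightarrow> c \<in> D \<and> m < Min (S c)" for c by (simp add: B_def blk_def)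
  have BD: "B \<subseteq> D" using Bdef by blast
  have fB: "finite B" using BD fD finite_subset by blast
  have small: "y \<le> m" if c: "c \<in> D" "c \<notin> B" and y: "y \<in> S c" for c y
  proof (rule ccontr)
    assume "\<not> y \<le> m"
    hence "y = Min (S c)" "m < y" using minimal[OF c(1) y] by auto
    thus False using Bdef c by simp
  qed
  have cfB: "cf x \<in> B" "x = Min (S (cf x))" if "m < x" "x \<le> N" for x
  proof -
    have h: "cf x \<in> D" "x \<in> S (cf x)" using cfp[of x] that by auto
    show "x = Min (S (cf x))" using minimal[OF h] that by simp
    thus "cf x \<in> B" using Bdef h that by simp
  qed
  have bij: "bij_betw cf {Suc m..N} B"
    unfolding bij_betw_def
  proof
    show "inj_on cf {Suc m..N}"
    proof
      fix x y assume x: "x \<in> {Suc m..N}" and y: "y \<in> {Suc m..N}" and e: "cf x = cf y"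
      have "x = Min (S (cf x))" "y = Min (S (cf y))" using cfB x y by auto
      thus "x = y" using e by simp
    qed
    show "cf ` {Suc m..N} = B"
    proof
      show "cf ` {Suc m..N} \<subseteq> B" using cfB by auto
      show "B \<subseteq> cf ` {Suc m..N}"
      proof
        fix c assume cB: "c \<in> B"
        hence cD: "c \<in> D" and mc: "m < Min (S c)" using Bdef by auto
        have mi: "Min (S c) \<in> S c" using FD_Min_in[OF S cD] .
        have "Min (S c) \<le> N" using FD_sub[OF S, of c] mi by auto
        moreover have "cf (Min (S c)) = c" using cfc[OF cD mi] .
        ultimately show "c \<in> cf ` {Suc m..N}" using mc by (intro image_eqI[of c cf "Min (S c)"]) auto
      qed
    qed
  qed
  have cB: "card B = N - m" using bij_betw_same_card[OF bij] by simp
  show "B \<in> R D (N - m)"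
    unfolding R_def mem_Collect_eq
  proof (intro conjI ballI BD cB notI)
    fix u v assume u: "u \<in> D - B" and v: "v \<in> B" and le: "fst v \<le> fst u \<and> snd v \<le> snd u"
    have vD: "v \<in> D" and mv: "m < Min (S v)" using v Bdef by auto
    have "v \<noteq> u" using u v by auto
    hence "Max (S v) < Min (S u)" using FD_mono[OF S vD, of u] u le by simp
    moreover have "Min (S u) \<le> m" using small[of u "Min (S u)"] u FD_Min_in[OF S, of u] by simp
    moreover have "Min (S v) \<le> Max (S v)" using FD_Min_in[OF S vD] FD_Max_ge[OF S] by blast
    ultimately show False using mv by simp
  qed
  have rB: "\<And>u. u \<notin> B \<Longrightarrow> rst B S u = S u" by (simp add: rst_def)
  show "rst B S \<in> FD (D - B) m"
    unfolding FD_def mem_Collect_eq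
  proof (intro conjI ballI allI impI)
    fix u assume "u \<notin> D - B"
    thus "rst B S u = {}" using FD_out[OF S, of u] by (auto simp: rst_def)
  next
    fix u assume "u \<in> D - B" thus "rst B S u \<noteq> {}" using FD_ne[OF S] rB by simp
  next
    fix u v assume u: "u \<in> D - B" and v: "v \<in> D - B" and uv: "u \<noteq> v"
    show "rst B S u \<inter> rst B S v = {}"
    proof (rule ccontr)
      assume "rst B S u \<inter> rst B S v \<noteq> {}"
      then obtain x where "x \<in> S u" "x \<in> S v" using rB u v by auto
      hence "u = v" using FD_disj[OF S, of u v x] u v by simp
      thus False using uv by simp
    qed
  next
    show "(\<Union>u\<in>D - B. rst B S u) = {1..m}"
    proof
      show "(\<Union>u\<in>D - B. rst B S u) \<subseteq> {1..m}"
      proof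
        fix x assume "x \<in> (\<Union>u\<in>D - B. rst B S u)"
        then obtain u where u: "u \<in> D - B" "x \<in> S u" using rB by auto
        have "x \<le> m" using small[of u x] u by simp
        moreover have "1 \<le> x" using FD_sub[OF S, of u] u by auto
        ultimately show "x \<in> {1..m}" by simp
      qed
      show "{1..m} \<subseteq> (\<Union>u\<in>D - B. rst B S u)"
      proof
        fix x assume x: "x \<in> {1..m}"
        hence h: "cf x \<in> D" "x \<in> S (cf x)" using cfp[of x] hm by auto
        have "cf x \<notin> B"
        proof
          assume "cf x \<in> B"
          hence "m < Min (S (cf x))" using Bdef by simp
          moreover have "Min (S (cf x)) \<le> x" using FD_Min_le[OF S h(2)] .
          ultimately show False using x by simp
        qed
        thus "x \<in> (\<Union>u\<in>D - B. rst B S u)" using h rB[of "cf x"] by blast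
      qed
    qed
  next
    fix u v assume u: "u \<in> D - B" and v: "v \<in> D - B" and h: "u \<noteq> v \<and> fst u \<le> fst v \<and> snd u \<le> snd v"
    show "Max (rst B S u) < Min (rst B S v)" using FD_mono[OF S, of u v] u v h rB by simp
  qed
  show "DesD (D - B) (rst B S) \<subseteq> Y"
  proof -
    have "DesD (D - B) (rst B S) \<subseteq> DesD D S"
    proof
      fix x assume "x \<in> DesD (D - B) (rst B S)"
      then consider (a) c where "c \<in> D - B" "x \<in> rst B S c" "x \<noteq> Min (rst B S c)"
        | (b) c c' where "c \<in> D - B" "c' \<in> D - B" "x = Min (rst B S c)" "Suc x = Min (rst B S c')" "fst c' < fst c"
        unfolding DesD_def by blast
      thus "x \<in> DesD D S"
      proof cases
        case a
        hence "x \<in> {x. \<exists>c\<in>D. x \<in> S c \<and> x \<noteq> Min (S c)}" using rB[of c] by auto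
        thus ?thesis unfolding DesD_def by (rule UnI1)
      next
        case b
        hence "x \<in> {j. \<exists>c\<in>D. \<exists>c'\<in>D. j = Min (S c) \<and> Suc j = Min (S c') \<and> fst c' < fst c}"
          using rB[of c] rB[of c'] by auto
        thus ?thesis unfolding DesD_def by (rule UnI2)
      qed
    qed
    thus ?thesis using Y by blast
  qed
  define L where "L = map cf [Suc m..<Suc N]"
  have lenL: "length L = N - m" unfolding L_def by (simp only: length_map length_upt diff_Suc_Suc)
  have Lnth: "L ! i = cf (Suc m + i)" if "i < N - m" for i
    unfolding L_def by (subst nth_map_upt) (use that in auto)
  have lexstep: "cf x < cf (Suc x)" if "m < x" "x < N" for x
  proof -
    have c: "cf x \<in> D" "x \<in> S (cf x)" and x: "x = Min (S (cf x))" using cfp[of x] cfB[of x] that by auto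
    have c': "cf (Suc x) \<in> D" "Suc x \<in> S (cf (Suc x))" and x': "Suc x = Min (S (cf (Suc x)))"
      using cfp[of "Suc x"] cfB[of "Suc x"] that by auto
    have ne: "cf x \<noteq> cf (Suc x)"
    proof
      assume "cf x = cf (Suc x)"
      hence "Suc x = x" using x x' by simp
      thus False by simp
    qed
    have nY: "x \<notin> Y" using hY that by simp
    have "\<not> fst (cf (Suc x)) < fst (cf x)"
    proof
      assume "fst (cf (Suc x)) < fst (cf x)"
      hence "x \<in> {j. \<exists>c\<in>D. \<exists>c'\<in>D. j = Min (S c) \<and> Suc j = Min (S c') \<and> fst c' < fst c}"
        using c(1) c'(1) x x' by blast
      hence "x \<in> DesD D S" unfolding DesD_def by (rule UnI2)
      thus False using Y nY by blast
    qed
    moreover have "fst (cf x) = fst (cf (Suc x)) \<Longrightarrow> snd (cf x) < snd (cf (Suc x))"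
    proof (rule ccontr)
      assume e: "fst (cf x) = fst (cf (Suc x))" and "\<not> snd (cf x) < snd (cf (Suc x))"
      hence "Max (S (cf (Suc x))) < Min (S (cf x))"
        using FD_mono[OF S c'(1) c(1)] ne by simp
      moreover have "Suc x \<le> Max (S (cf (Suc x)))" using FD_Max_ge[OF S c'(2)] .
      ultimately show False using x by simp
    qed
    ultimately show ?thesis by (auto simp: less_prod_def')
  qed
  have sL: "sorted_wrt (<) L"
  proof (subst sorted_wrt_iff_nth_Suc_transp)
    show "transp ((<) :: nat \<times> nat \<Rightarrow> _)" by (auto simp: transp_def)
    show "\<forall>i. Suc i < length L \<longrightarrow> L ! i < L ! Suc i"
    proof (intro allI impI)
      fix i assume "Suc i < length L"
      hence i: "Suc i < N - m" using lenL by simp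
      have "cf (Suc m + i) < cf (Suc (Suc m + i))" using lexstep i by simp
      thus "L ! i < L ! Suc i" using Lnth[of i] Lnth[of "Suc i"] i by simp
    qed
  qed
  have setL: "set L = B"
  proof -
    have "set [Suc m..<Suc N] = {Suc m..N}" by (simp only: set_upt atLeastLessThanSuc_atLeastAtMost)
    hence "set L = cf ` {Suc m..N}" by (simp only: L_def set_map)
    thus ?thesis using bij by (simp add: bij_betw_def)
  qed
  have Leq: "sorted_list_of_set B = L"
    using sorted_list_of_set_unique[of B L] fB sL setL lenL cB by simp
  show "extB m N B (rst B S) = S"
  proof
    fix u
    show "extB m N B (rst B S) u = S u"
    proof (cases "u \<in> B")
      case False thus ?thesis by (simp add: extB_def rst_def)
    next
      case True
      have uD: "u \<in> D" and mu: "m < Min (S u)" using True Bdef by auto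
      have "{x. m < x \<and> x \<le> N \<and> L ! (x - Suc m) = u} = S u"
      proof (rule set_eqI, rule iffI)
        fix x assume "x \<in> {x. m < x \<and> x \<le> N \<and> L ! (x - Suc m) = u}"
        hence x: "m < x" "x \<le> N" "L ! (x - Suc m) = u" by auto
        have "L ! (x - Suc m) = cf x" using Lnth[of "x - Suc m"] x by simp
        thus "x \<in> S u" using cfp[of x] x by auto
      next
        fix x assume x: "x \<in> S u"
        have "Min (S u) \<le> x" using FD_Min_le[OF S x] .
        hence mx: "m < x" using mu by simp
        have xN: "x \<le> N" using FD_sub[OF S, of u] x by auto
        have "L ! (x - Suc m) = cf x" using Lnth[of "x - Suc m"] mx xN by simp
        also have "cf x = u" using cfc[OF uD x] .
        finally show "x \<in> {x. m < x \<and> x \<le> N \<and> L ! (x - Suc m) = u}" using mx xN by simp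
      qed
      thus ?thesis using True Leq by (simp add: extB_def)
    qed
  qed
qed



definition mval :: "nat \<Rightarrow> nat set \<Rightarrow> nat" where
  "mval N Y = Max (insert 0 {y \<in> Y. y < N})"

lemma mval_props:
  assumes "0 < N"
  shows "mval N Y < N" "\<And>x. mval N Y < x \<Longrightarrow> x < N \<Longrightarrow> x \<notin> Y" "mval N Y = 0 \<or> mval N Y \<in> Y"
proof -
  have fin: "finite (insert 0 {y \<in> Y. y < N})" by simp
  have "\<forall>y\<in>insert 0 {y \<in> Y. y < N}. y < N" using assms by auto
  thus "mval N Y < N" unfolding mval_def using Max_in[OF fin] by blast
  show "\<And>x. mval N Y < x \<Longrightarrow> x < N \<Longrightarrow> x \<notin> Y"
  proof
    fix x assume "mval N Y < x" "x < N" "x \<in> Y"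
    hence "x \<in> insert 0 {y \<in> Y. y < N}" by simp
    hence "x \<le> mval N Y" unfolding mval_def using Max_ge[OF fin] by blast
    thus False using \<open>mval N Y < x\<close> by simp
  qed
  have "mval N Y \<in> insert 0 {y \<in> Y. y < N}" unfolding mval_def using Max_in[OF fin] by blast
  thus "mval N Y = 0 \<or> mval N Y \<in> Y" by auto
qed

lemma card_new:
  fixes Y :: "nat set"
  assumes fD: "finite D" and N: "0 < N"
  defines "m \<equiv> mval N Y"
  shows "card {S \<in> FD D N. DesD D S \<subseteq> Y \<and> newp D N S} = (\<Sum>B\<in>R D (N - m). G (D - B) m Y)"
proof -
  note mp = mval_props[OF N, of Y, folded m_def]
  let ?A = "{S \<in> FD D N. DesD D S \<subseteq> Y \<and> newp D N S}"
  define fib where "fib B = {S \<in> ?A. blk D m S = B}" for B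
  have Aeq: "?A = (\<Union>B\<in>R D (N - m). fib B)"
  proof
    show "?A \<subseteq> (\<Union>B\<in>R D (N - m). fib B)"
    proof
      fix S assume S: "S \<in> ?A"
      have "blk D m S \<in> R D (N - m)" using decompose(1)[OF fD _ _ _ mp(1) mp(2)] S by blast
      moreover have "S \<in> fib (blk D m S)" using S by (simp add: fib_def)
      ultimately show "S \<in> (\<Union>B\<in>R D (N - m). fib B)" by blast
    qed
    show "(\<Union>B\<in>R D (N - m). fib B) \<subseteq> ?A" by (auto simp: fib_def)
  qed
  have finR: "finite (R D (N - m))"
  proof (rule finite_subset[of _ "Pow D"])
    show "R D (N - m) \<subseteq> Pow D" by (auto simp: R_def)
  qed (use fD in simp)
  have finF: "\<forall>B\<in>R D (N - m). finite (fib B)"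
    using finite_FD[OF fD, of N] by (auto simp: fib_def)
  have disj: "\<forall>B\<in>R D (N - m). \<forall>B'\<in>R D (N - m). B \<noteq> B' \<longrightarrow> fib B \<inter> fib B' = {}"
    by (auto simp: fib_def)
  have cfib: "card (fib B) = G (D - B) m Y" if B: "B \<in> R D (N - m)" for B
  proof -
    have "bij_betw (rst B) (fib B) {S' \<in> FD (D - B) m. DesD (D - B) S' \<subseteq> Y}"
    proof (rule bij_betw_byWitness[where f'="extB m N B"])
      show "\<forall>S\<in>fib B. extB m N B (rst B S) = S"
      proof
        fix S assume "S \<in> fib B"
        hence S: "S \<in> FD D N" "DesD D S \<subseteq> Y" "newp D N S" and b: "blk D m S = B" by (auto simp: fib_def)
        show "extB m N B (rst B S) = S" using decompose(4)[OF fD S mp(1) mp(2)] b by simp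
      qed
      show "\<forall>S'\<in>{S' \<in> FD (D - B) m. DesD (D - B) S' \<subseteq> Y}. rst B (extB m N B S') = S'"
      proof
        fix S' assume "S' \<in> {S' \<in> FD (D - B) m. DesD (D - B) S' \<subseteq> Y}"
        hence S': "S' \<in> FD (D - B) m" "DesD (D - B) S' \<subseteq> Y" by auto
        show "rst B (extB m N B S') = S'" using construct(5)[OF fD B S' mp(1) mp(3)] .
      qed
      show "rst B ` fib B \<subseteq> {S' \<in> FD (D - B) m. DesD (D - B) S' \<subseteq> Y}"
      proof
        fix T assume "T \<in> rst B ` fib B"
        then obtain S where "S \<in> fib B" and T: "T = rst B S" by blast
        hence S: "S \<in> FD D N" "DesD D S \<subseteq> Y" "newp D N S" and b: "blk D m S = B" by (auto simp: fib_def)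
        have "rst B S \<in> FD (D - B) m" using decompose(2)[OF fD S mp(1) mp(2)] b by simp
        moreover have "DesD (D - B) (rst B S) \<subseteq> Y" using decompose(3)[OF fD S mp(1) mp(2)] b by simp
        ultimately show "T \<in> {S' \<in> FD (D - B) m. DesD (D - B) S' \<subseteq> Y}" using T by simp
      qed
      show "extB m N B ` {S' \<in> FD (D - B) m. DesD (D - B) S' \<subseteq> Y} \<subseteq> fib B"
      proof
        fix T assume "T \<in> extB m N B ` {S' \<in> FD (D - B) m. DesD (D - B) S' \<subseteq> Y}"
        then obtain S' where S': "S' \<in> FD (D - B) m" "DesD (D - B) S' \<subseteq> Y" and T: "T = extB m N B S'" by blast
        note c = construct[OF fD B S' mp(1) mp(3)]
        show "T \<in> fib B" using c(1-4) T by (simp add: fib_def)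
      qed
    qed
    thus ?thesis by (simp add: bij_betw_same_card G_def)
  qed
  have "card ?A = (\<Sum>B\<in>R D (N - m). card (fib B))"
    unfolding Aeq by (rule card_UN_disjoint[OF finR finF disj])
  also have "\<dots> = (\<Sum>B\<in>R D (N - m). G (D - B) m Y)" using cfib by simp
  finally show ?thesis .
qed

lemma G_rec:
  assumes fD: "finite D"
  shows "G D (Suc M) Y = (\<Sum>B\<in>R D (Suc M - mval (Suc M) Y). G (D - B) (mval (Suc M) Y) Y)
            + (if Suc M \<in> Y then card (maxels D) * G D M Y else 0)"
proof -
  let ?A1 = "{S \<in> FD D (Suc M). DesD D S \<subseteq> Y \<and> newp D (Suc M) S}"
  let ?A2 = "{S \<in> FD D (Suc M). DesD D S \<subseteq> Y \<and> \<not> newp D (Suc M) S}"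
  have e: "{S \<in> FD D (Suc M). DesD D S \<subseteq> Y} = ?A1 \<union> ?A2" by blast
  have f1: "finite ?A1" "finite ?A2" using finite_FD[OF fD, of "Suc M"] by auto
  have "G D (Suc M) Y = card ?A1 + card ?A2"
    unfolding G_def e by (rule card_Un_disjoint[OF f1]) blast
  thus ?thesis using card_new[OF fD, of "Suc M" Y] card_rep[OF fD, of M Y] by simp
qed

lemma swap_swap_img: "prod.swap ` prod.swap ` A = A"
  by (simp add: image_image)

lemma inj_swap_img: "inj_on (\<lambda>B. prod.swap ` B) X"
  by (rule inj_onI) (metis swap_swap_img)

lemma maxels_swap1:
  assumes c: "c \<in> maxels D" shows "prod.swap c \<in> maxels (prod.swap ` D)"
proof -
  have cD: "c \<in> D" and mx: "\<And>v. v \<in> D \<Longrightarrow> fst c \<le> fst v \<Longrightarrow> snd c \<le> snd v \<Longrightarrow> v = c"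
    using c by (auto simp: maxels_def)
  have "\<forall>v\<in>prod.swap ` D. fst (prod.swap c) \<le> fst v \<and> snd (prod.swap c) \<le> snd v \<longrightarrow> v = prod.swap c"
  proof (intro ballI impI)
    fix v assume "v \<in> prod.swap ` D" and le: "fst (prod.swap c) \<le> fst v \<and> snd (prod.swap c) \<le> snd v"
    then obtain v0 where v0: "v0 \<in> D" "v = prod.swap v0" by blast
    have "v0 = c" using mx[OF v0(1)] le v0(2) by (cases v0, cases c) auto
    thus "v = prod.swap c" using v0 by simp
  qed
  thus ?thesis using cD unfolding maxels_def by blast
qed

lemma maxels_swap: "maxels (prod.swap ` D) = prod.swap ` maxels D"
proof
  show "prod.swap ` maxels D \<subseteq> maxels (prod.swap ` D)" using maxels_swap1 by blast
  show "maxels (prod.swap ` D) \<subseteq> prod.swap ` maxels D"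
  proof
    fix c assume "c \<in> maxels (prod.swap ` D)"
    hence "prod.swap c \<in> maxels D" using maxels_swap1[of c "prod.swap ` D"] swap_swap_img[of D] by simp
    thus "c \<in> prod.swap ` maxels D" by (metis image_eqI swap_swap)
  qed
qed

lemma R_swap1: "B \<in> R D j \<Longrightarrow> prod.swap ` B \<in> R (prod.swap ` D) j"
  unfolding R_def mem_Collect_eq
proof (elim conjE, intro conjI ballI)
  assume "B \<subseteq> D" "card B = j" and rem: "\<forall>u\<in>D - B. \<forall>v\<in>B. \<not> (fst v \<le> fst u \<and> snd v \<le> snd u)"
  show "prod.swap ` B \<subseteq> prod.swap ` D" using \<open>B \<subseteq> D\<close> by blast
  show "card (prod.swap ` B) = j" using \<open>card B = j\<close> by (simp add: card_image)
  fix u v assume u: "u \<in> prod.swap ` D - prod.swap ` B" and v: "v \<in> prod.swap ` B"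
  obtain u0 where u0: "u = prod.swap u0" "u0 \<in> D - B" using u by auto
  obtain v0 where v0: "v = prod.swap v0" "v0 \<in> B" using v by auto
  show "\<not> (fst v \<le> fst u \<and> snd v \<le> snd u)" using rem u0 v0 by auto
qed

lemma R_swap: "R (prod.swap ` D) j = (\<lambda>B. prod.swap ` B) ` R D j"
proof
  show "(\<lambda>B. prod.swap ` B) ` R D j \<subseteq> R (prod.swap ` D) j" using R_swap1 by blast
  show "R (prod.swap ` D) j \<subseteq> (\<lambda>B. prod.swap ` B) ` R D j"
  proof
    fix B assume "B \<in> R (prod.swap ` D) j"
    hence "prod.swap ` B \<in> R D j" using R_swap1[of B "prod.swap ` D" j] swap_swap_img[of D] by simp
    moreover have "B = prod.swap ` (prod.swap ` B)" by (simp add: swap_swap_img)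
    ultimately show "B \<in> (\<lambda>B. prod.swap ` B) ` R D j" by blast
  qed
qed

lemma G_swap: "finite D \<Longrightarrow> G D N Y = G (prod.swap ` D) N Y"
proof (induction N arbitrary: D rule: less_induct)
  case (less N)
  show ?case
  proof (cases N)
    case 0
    thus ?thesis by (simp add: G_zero)
  next
    case (Suc M)
    let ?m = "mval (Suc M) Y"
    let ?j = "Suc M - ?m"
    have m: "?m < Suc M" using mval_props(1)[of "Suc M" Y] by simp
    have fD': "finite (prod.swap ` D)" using less.prems by simp
    have s1: "(\<Sum>B\<in>R (prod.swap ` D) ?j. G (prod.swap ` D - B) ?m Y)
             = (\<Sum>B\<in>R D ?j. G (prod.swap ` D - prod.swap ` B) ?m Y)"
      unfolding R_swap by (subst sum.reindex[OF inj_swap_img]) (simp add: comp_def)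
    have s2: "G (prod.swap ` D - prod.swap ` B) ?m Y = G (D - B) ?m Y" if "B \<in> R D ?j" for B
    proof -
      have "prod.swap ` D - prod.swap ` B = prod.swap ` (D - B)" by (simp add: image_set_diff)
      moreover have "finite (D - B)" using less.prems by simp
      ultimately show ?thesis using less.IH[OF _ \<open>finite (D - B)\<close>, of ?m] m Suc by simp
    qed
    have s3: "G D M Y = G (prod.swap ` D) M Y" using less.IH[OF _ less.prems, of M] Suc by simp
    have s4: "card (maxels (prod.swap ` D)) = card (maxels D)"
      unfolding maxels_swap by (simp add: card_image)
    show ?thesis unfolding Suc G_rec[OF less.prems] G_rec[OF fD'] s1 s3 s4
      using s2 by simp
  qed
qed

lemma moebius_eq:
  fixes f g :: "nat set \<Rightarrow> nat"
  assumes h: "\<And>X. finite X \<Longrightarrow> (\<Sum>Z\<in>Pow X. f Z) = (\<Sum>Z\<in>Pow X. g Z)"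
  shows "finite X \<Longrightarrow> f X = g X"
proof (induction "card X" arbitrary: X rule: less_induct)
  case less
  have fP: "finite (Pow X)" using less.prems by simp
  have XP: "X \<in> Pow X" by simp
  have "(\<Sum>Z\<in>Pow X. f Z) = f X + (\<Sum>Z\<in>Pow X - {X}. f Z)" using sum.remove[OF fP XP] .
  moreover have "(\<Sum>Z\<in>Pow X. g Z) = g X + (\<Sum>Z\<in>Pow X - {X}. g Z)" using sum.remove[OF fP XP] .
  moreover have "(\<Sum>Z\<in>Pow X - {X}. f Z) = (\<Sum>Z\<in>Pow X - {X}. g Z)"
  proof (rule sum.cong[OF refl])
    fix Z assume "Z \<in> Pow X - {X}"
    hence Z: "Z \<subset> X" by auto
    hence "card Z < card X" using less.prems psubset_card_mono by blast
    moreover have "finite Z" using Z less.prems finite_subset by auto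
    ultimately show "f Z = g Z" using less.hyps by blast
  qed
  ultimately show ?case using h[OF less.prems] by simp
qed

lemma sum_pow_card:
  assumes fA: "finite A" and fX: "finite X"
  shows "(\<Sum>Z\<in>Pow X. card {S \<in> A. h S = Z}) = card {S \<in> A. h S \<subseteq> X}"
proof -
  have "{S \<in> A. h S \<subseteq> X} = (\<Union>Z\<in>Pow X. {S \<in> A. h S = Z})" by auto
  moreover have "card (\<Union>Z\<in>Pow X. {S \<in> A. h S = Z}) = (\<Sum>Z\<in>Pow X. card {S \<in> A. h S = Z})"
    by (rule card_UN_disjoint) (use fA fX in auto)
  ultimately show ?thesis by simp
qed

lemma main_general:
  assumes fD: "finite D" and fX: "finite X"
  shows "card {S \<in> FD D N. DesD D S = X} = card {S \<in> FD (prod.swap ` D) N. DesD (prod.swap ` D) S = X}"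
proof (rule moebius_eq[OF _ fX])
  fix X :: "nat set" assume fX: "finite X"
  have "(\<Sum>Z\<in>Pow X. card {S \<in> FD D N. DesD D S = Z}) = G D N X"
    unfolding G_def by (rule sum_pow_card[OF finite_FD[OF fD] fX])
  also have "\<dots> = G (prod.swap ` D) N X" by (rule G_swap[OF fD])
  also have "\<dots> = (\<Sum>Z\<in>Pow X. card {S \<in> FD (prod.swap ` D) N. DesD (prod.swap ` D) S = Z})"
    unfolding G_def by (rule sum_pow_card[OF finite_FD, symmetric]) (use fD fX in auto)
  finally show "(\<Sum>Z\<in>Pow X. card {S \<in> FD D N. DesD D S = Z})
      = (\<Sum>Z\<in>Pow X. card {S \<in> FD (prod.swap ` D) N. DesD (prod.swap ` D) S = Z})" .
qed

theorem theorem29: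
  fixes lam :: "nat list" and n k :: nat and X :: "nat set"
  assumes "is_partition lam n"
    and "X \<subseteq> {1..n + k}"
  shows "card {S \<in> SYT_plus lam k. Des_plus lam S = X}
       = card {S \<in> SYT_plus (conjugate lam) k. Des_plus (conjugate lam) S = X}"
proof -
  have sr: "sorted (rev lam)" using assms(1) by (simp add: is_partition_def)
  have fc: "ferrers (conjugate lam) = prod.swap ` ferrers lam" by (rule ferrers_conjugate[OF sr])
  have "sum_list (conjugate lam) = card (ferrers (conjugate lam))" by (simp add: card_ferrers)
  also have "\<dots> = card (ferrers lam)" unfolding fc by (simp add: card_image)
  also have "\<dots> = sum_list lam" by (simp add: card_ferrers)
  finally have sc: "sum_list (conjugate lam) = sum_list lam" .
  have fX: "finite X" using assms(2) finite_subset by blast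
  show ?thesis
    unfolding SYT_plus_FD Des_plus_DesD sc fc
    by (rule main_general[OF finite_ferrers fX])
qed

end
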